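(* There exists a permutation of the positive integers that does not contain any 4-term arithmetic progression with odd common difference as a subsequence.
   Context: A permutation of the positive integers is a sequence $(a_1,a_2,\ldots)$ in which every positive integer appears exactly once. A sequence contains a $k$-term arithmetic progression with common difference $d\neq 0$ as a subsequence if there are indices $i_1<i_2<\cdots<i_k$ with $a_{i_{m+1}} - a_{i_m} = d$ for all $1\le m<k$. The difference $d$ may be positive or negative. *)

theory Defs
  imports Main
begin

definition perm_pos :: "(nat \<Rightarrow> nat) \<Rightarrow> bool" where
  "perm_pos a \<longleftrightarrow> bij_betw a {1..} {1..}"

definition has_ap_subseq :: "(nat \<Rightarrow> nat) \<Rightarrow> nat \<Rightarrow> int \<Rightarrow> bool" where
  "has_ap_subseq a k d \<longleftrightarrow>
     (\<exists>i :: nat \<Rightarrow> nat. (\<forall>m \<in> {1..k}. i m \<ge> 1) \<and>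
        (\<forall>m. 1 \<le> m \<and> m < k \<longrightarrow> i m < i (m + 1) \<and>
              int (a (i (m + 1))) - int (a (i m)) = d))"

end

theory Submission
  imports Defs
begin
definition seqA :: "nat \<Rightarrow> nat" where
  "seqA n = (if n mod 3 = 1 then 4*(n div 3)+1 else if n mod 3 = 2 then 4*(n div 3)+3 else 2*(n div 3))"
definition invA :: "nat \<Rightarrow> nat" where
  "invA v = (if v mod 4 = 1 then 3*(v div 4)+1 else if v mod 4 = 3 then 3*(v div 4)+2 else 3*(v div 2))"

lemma e1: "seqA (3*k+1) = 4*k+1" proof -
  have "(3*k+1) mod 3 = 1" "(3*k+1) div 3 = k" by presburger+
  then show ?thesis unfolding seqA_def by simp qed
lemma e2: "seqA (3*k+2) = 4*k+3" proof -
  have "(3*k+2) mod 3 = 2" "(3*k+2) div 3 = k" by presburger+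
  then show ?thesis unfolding seqA_def by simp qed
lemma e3: "seqA (3*k+3) = 2*k+2" proof -
  have "(3*k+3) mod 3 = 0" "(3*k+3) div 3 = k+1" by presburger+
  then show ?thesis unfolding seqA_def by simp qed
lemma i1: "invA (4*k+1) = 3*k+1" proof -
  have "(4*k+1) mod 4 = 1" "(4*k+1) div 4 = k" by presburger+
  then show ?thesis unfolding invA_def by simp qed
lemma i2: "invA (4*k+3) = 3*k+2" proof -
  have "(4*k+3) mod 4 = 3" "(4*k+3) div 4 = k" by presburger+
  then show ?thesis unfolding invA_def by simp qed
lemma i3: "invA (2*k+2) = 3*k+3" proof -
  have "(2*k+2) mod 4 \<noteq> 1" "(2*k+2) mod 4 \<noteq> 3" "(2*k+2) div 2 = k+1" by presburger+
  then show ?thesis unfolding invA_def by simp qed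
lemma sc: assumes "(n::nat) \<ge> 1" obtains k where "n = 3*k+1" | k where "n = 3*k+2" | k where "n=3*k+3"
proof -
  have "\<exists>k. n = 3*k+1 \<or> n = 3*k+2 \<or> n=3*k+3" using assms by presburger
  then show ?thesis using that by blast
qed
lemma sc2: assumes "(n::nat) \<ge> 1" obtains k where "n = 4*k+1" | k where "n = 4*k+3" | k where "n=2*k+2"
proof -
  have "\<exists>k. n = 4*k+1 \<or> n = 4*k+3 \<or> n=2*k+2" using assms by presburger
  then show ?thesis using that by blast
qed
lemma scv: assumes "(n::nat) \<ge> 1"
  obtains k where "n = 3*k+1" "seqA n = 4*k+1" | k where "n = 3*k+2" "seqA n = 4*k+3" | k where "n=3*k+3" "seqA n = 2*k+2"
  using assms by (rule sc) (auto simp only: e1 e2 e3)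
lemma scv2: assumes "(n::nat) \<ge> 1"
  obtains k where "n = 4*k+1" "invA n = 3*k+1" | k where "n = 4*k+3" "invA n = 3*k+2" | k where "n=2*k+2" "invA n = 3*k+3"
  using assms by (rule sc2) (auto simp only: i1 i2 i3)
lemma L1: assumes "1\<le>p" "p<q" "odd (seqA p)" "odd (seqA q)" shows "seqA p < seqA q"
proof -
  have q1: "1 \<le> q" using assms by simp
  show ?thesis
    by (rule scv[OF assms(1)]; rule scv[OF q1]; use assms in \<open>auto\<close>)
qed
lemma L2: assumes "1\<le>p" "p<q" "even (seqA p)" "odd (seqA q)" shows "2 * seqA p < seqA q"
proof -
  have q1: "1 \<le> q" using assms by simp
  show ?thesis
    by (rule scv[OF assms(1)]; rule scv[OF q1]; use assms in \<open>auto\<close>)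
qed
lemma perm: "perm_pos seqA"
  unfolding perm_pos_def
proof (rule bij_betw_byWitness[where f'=invA])
  show "\<forall>x\<in>{1..}. invA (seqA x) = x"
  proof
    fix x :: nat assume "x \<in> {1..}" then have "1 \<le> x" by simp
    then show "invA (seqA x) = x" by (rule scv) (simp_all only: i1 i2 i3)
  qed
  show "\<forall>y\<in>{1..}. seqA (invA y) = y"
  proof
    fix x :: nat assume "x \<in> {1..}" then have "1 \<le> x" by simp
    then show "seqA (invA x) = x" by (rule scv2) (simp_all only: e1 e2 e3)
  qed
  show "seqA ` {1..} \<subseteq> {1..}"
  proof
    fix y assume "y \<in> seqA ` {1..}" then obtain x where "1 \<le> x" "y = seqA x" by auto
    then show "y \<in> {1..}" by (cases rule: scv) auto
  qed
  show "invA ` {1..} \<subseteq> {1..}"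
  proof
    fix y assume "y \<in> invA ` {1..}" then obtain x where "1 \<le> x" "y = invA x" by auto
    then show "y \<in> {1..}" by (cases rule: scv2) auto
  qed
qed
theorem theorem2:
  shows "\<exists>a. perm_pos a \<and> (\<forall>d :: int. odd d \<longrightarrow> \<not> has_ap_subseq a 4 d)"
proof (intro exI conjI allI impI)
  show "perm_pos seqA" by (rule perm)
  fix d :: int assume od: "odd d"
  show "\<not> has_ap_subseq seqA 4 d"
  proof
    assume "has_ap_subseq seqA 4 d"
    then obtain i where i1: "\<forall>m::nat \<in> {1..4}. i m \<ge> 1" and
      st: "\<forall>m::nat. 1 \<le> m \<and> m < 4 \<longrightarrow> i m < i (m + 1) \<and>
              int (seqA (i (m + 1))) - int (seqA (i m)) = d"
      unfolding has_ap_subseq_def by blast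
    have p1: "1 \<le> i 1" "1 \<le> i 2" "1 \<le> i 3" using i1[rule_format, of 1] i1[rule_format, of 2] i1[rule_format, of 3] by simp_all
    have s1: "i 1 < i 2" "int (seqA (i 2)) - int (seqA (i 1)) = d" using st[rule_format, of 1] by (simp_all add: eval_nat_numeral)
    have s2: "i 2 < i 3" "int (seqA (i 3)) - int (seqA (i 2)) = d" using st[rule_format, of 2] by (simp_all add: eval_nat_numeral)
    have s3: "i 3 < i 4" "int (seqA (i 4)) - int (seqA (i 3)) = d" using st[rule_format, of 3] by (simp_all add: eval_nat_numeral)
    show False
    proof (cases "odd (seqA (i 1))")
      case True
      have "int (seqA (i 2)) = int (seqA (i 1)) + d" using s1 by linarith
      then have e2: "even (seqA (i 2))" using True od by (metis even_add even_of_nat)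
      have "int (seqA (i 3)) = int (seqA (i 2)) + d" using s2 by linarith
      then have o3: "odd (seqA (i 3))" using e2 od by (metis even_add even_of_nat)
      have "seqA (i 1) < seqA (i 3)" using L1[of "i 1" "i 3"] p1 s1 s2 True o3 by simp
      moreover have "2 * seqA (i 2) < seqA (i 3)" using L2[of "i 2" "i 3"] p1 s2 e2 o3 by simp
      ultimately show False using s1 s2 by linarith
    next
      case False
      have "int (seqA (i 2)) = int (seqA (i 1)) + d" using s1 by linarith
      then have o2: "odd (seqA (i 2))" using False od by (metis even_add even_of_nat)
      have "int (seqA (i 3)) = int (seqA (i 2)) + d" using s2 by linarith
      then have e3: "even (seqA (i 3))" using o2 od by (metis even_add even_of_nat)
      have "int (seqA (i 4)) = int (seqA (i 3)) + d" using s3 by linarith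
      then have o4: "odd (seqA (i 4))" using e3 od by (metis even_add even_of_nat)
      have "seqA (i 2) < seqA (i 4)" using L1[of "i 2" "i 4"] p1 s2 s3 o2 o4 by simp
      moreover have "2 * seqA (i 3) < seqA (i 4)" using L2[of "i 3" "i 4"] p1 s3 e3 o4 by simp
      ultimately show False using s1 s2 s3 by linarith
    qed
  qed
qed
end
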